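(* Let $g\colon\mathbb{R}^d\to\mathbb{R}$ be differentiable with $L_1$-Lipschitz gradient, and let $G$ be an $(a,b)$-inexact gradient oracle for $g$ with $0\le a\le1/20$, $b\ge0$. Let $0<\eta\le\min\{1,1/L_1\}$, $y_0\in\mathbb{R}^d$, and $y_{t+1}=y_t-\eta G(y_t)$. Then for all integers $0\le\tau\le t$, $$\|y_\tau-y_0\|^2\le16\eta t\frac{(1+a)^2}{1-a}\Big(g(y_0)-g(y_t)+(5+\eta)tb^2\Big).$$
   Context: A map $G\colon\mathbb{R}^d\to\mathbb{R}^d$ is an $(a,b)$-inexact gradient oracle for $g$ if $\|\nabla g(x)-G(x)\|\le a\|\nabla g(x)\|+b$ for all $x\in\mathbb{R}^d$. *)

theory Defs
  imports "HOL-Analysis.Analysis"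
begin

definition inexact_gradient_oracle ::
  "real \<Rightarrow> real \<Rightarrow> ('a::real_normed_vector \<Rightarrow> 'a) \<Rightarrow> ('a \<Rightarrow> 'a) \<Rightarrow> bool" where
  "inexact_gradient_oracle a b grad_g G \<longleftrightarrow>
     (\<forall>x. norm (grad_g x - G x) \<le> a * norm (grad_g x) + b)"

end

theory Submission
  imports Defs
begin

lemma descent:
  fixes g :: "'a::euclidean_space \<Rightarrow> real" and grad_g :: "'a \<Rightarrow> 'a"
  assumes grad: "\<And>x. (g has_derivative (\<lambda>h. grad_g x \<bullet> h)) (at x)"
    and lip: "L-lipschitz_on UNIV grad_g"
  shows "g (x + h) \<le> g x + grad_g x \<bullet> h + L / 2 * (norm h)\<^sup>2"
proof -
  define \<phi> where "\<phi> s = g (x + s *\<^sub>R h) - s * (grad_g x \<bullet> h) - L/2 * s\<^sup>2 * (norm h)\<^sup>2" for s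
  have "\<phi> 1 \<le> \<phi> 0"
  proof (rule DERIV_nonpos_imp_nonincreasing[of 0 1 \<phi>])
    fix s :: real assume s: "0 \<le> s" "s \<le> 1"
    have d1: "((\<lambda>s. x + s *\<^sub>R h) has_derivative (\<lambda>d. d *\<^sub>R h)) (at s)"
      by (auto intro!: derivative_eq_intros)
    have "((\<lambda>s. g (x + s *\<^sub>R h)) has_derivative (\<lambda>d. grad_g (x + s *\<^sub>R h) \<bullet> (d *\<^sub>R h))) (at s)"
      using has_derivative_compose[OF d1 grad] by simp
    hence "((\<lambda>s. g (x + s *\<^sub>R h)) has_real_derivative grad_g (x + s *\<^sub>R h) \<bullet> h) (at s)"
      by (simp add: has_field_derivative_def mult_commute_abs)
    hence D: "(\<phi> has_real_derivative (grad_g (x + s *\<^sub>R h) \<bullet> h - grad_g x \<bullet> h - L * s * (norm h)\<^sup>2)) (at s)"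
      unfolding \<phi>_def by (auto intro!: derivative_eq_intros)
    have "grad_g (x + s *\<^sub>R h) \<bullet> h - grad_g x \<bullet> h = (grad_g (x + s *\<^sub>R h) - grad_g x) \<bullet> h"
      by (simp add: inner_diff_left)
    also have "\<dots> \<le> norm (grad_g (x + s *\<^sub>R h) - grad_g x) * norm h"
      by (rule norm_cauchy_schwarz)
    also have "norm (grad_g (x + s *\<^sub>R h) - grad_g x) \<le> L * (s * norm h)"
      using lipschitz_onD[OF lip, of "x + s *\<^sub>R h" x] s by (simp add: dist_norm)
    hence "norm (grad_g (x + s *\<^sub>R h) - grad_g x) * norm h \<le> L * (s * norm h) * norm h"
      by (simp add: mult_right_mono)
    finally have "grad_g (x + s *\<^sub>R h) \<bullet> h - grad_g x \<bullet> h - L * s * (norm h)\<^sup>2 \<le> 0"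
      by (simp add: power2_eq_square algebra_simps)
    with D show "\<exists>y. (\<phi> has_real_derivative y) (at s) \<and> y \<le> 0" by blast
  qed simp
  thus ?thesis unfolding \<phi>_def by simp
qed


lemma step_real:
  fixes x E N D a b \<eta> C :: real
  assumes "0 \<le> x" "0 \<le> E" "E \<le> a*x + b" "N \<le> x + E" "0 \<le> N"
    "D \<ge> \<eta>/2 * (x\<^sup>2 - E\<^sup>2)" "0 \<le> a" "a \<le> 1/20" "0 \<le> b" "0 < \<eta>" "\<eta> \<le> 1" "16 \<le> C"
  shows "\<eta> * N\<^sup>2 \<le> C * D + C * (5 + \<eta>) * b\<^sup>2"
proof -
  have N2: "N\<^sup>2 \<le> 2*x\<^sup>2 + 2*E\<^sup>2"
  proof -
    have "N\<^sup>2 \<le> (x+E)\<^sup>2" using assms by (intro power_mono) auto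
    also have "\<dots> \<le> 2*x\<^sup>2 + 2*E\<^sup>2" using zero_le_power2[of "x - E"] unfolding power2_diff power2_sum by linarith
    finally show ?thesis .
  qed
  have E2: "E\<^sup>2 \<le> 2*a\<^sup>2*x\<^sup>2 + 2*b\<^sup>2"
  proof -
    have "E\<^sup>2 \<le> (a*x+b)\<^sup>2" using assms by (intro power_mono) auto
    also have "\<dots> \<le> 2*a\<^sup>2*x\<^sup>2 + 2*b\<^sup>2" using zero_le_power2[of "a*x - b"] unfolding power2_diff power2_sum power_mult_distrib by linarith
    finally show ?thesis .
  qed
  have a2: "a\<^sup>2 \<le> 1/400" using power_mono[of a "1/20" 2] assms by (simp add: power_divide)
  have CD: "C * D \<ge> C * (\<eta>/2 * (x\<^sup>2 - E\<^sup>2))" using assms by (intro mult_left_mono) auto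
  have b5: "C * (5 + \<eta>) * b\<^sup>2 \<ge> \<eta> * (5 * C * b\<^sup>2)"
  proof -
    have "\<eta> * (5 * C * b\<^sup>2) \<le> 1 * (5 * C * b\<^sup>2)" using assms by (intro mult_right_mono) auto
    also have "\<dots> \<le> C * (5 + \<eta>) * b\<^sup>2" using assms by (simp add: algebra_simps)
    finally show ?thesis .
  qed
  have key: "2*x\<^sup>2 + 2*E\<^sup>2 \<le> C/2 * (x\<^sup>2 - E\<^sup>2) + 5 * C * b\<^sup>2"
  proof -
    have "(2 + C/2) * E\<^sup>2 \<le> (2 + C/2) * (2*a\<^sup>2*x\<^sup>2 + 2*b\<^sup>2)" using E2 assms by (intro mult_left_mono) auto
    moreover have "(2 + C/2) * (2*a\<^sup>2*x\<^sup>2) \<le> (2 + C/2) * (2*(1/400)*x\<^sup>2)"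
      using a2 assms by (intro mult_left_mono mult_right_mono) auto
    moreover have "x\<^sup>2 \<ge> 0" by simp
    moreover have "(2 + C/2) * (2*(1/400)*x\<^sup>2) \<le> (C/2 - 2) * x\<^sup>2"
    proof -
      have "(2 + C/2) * (2*(1/400)) \<le> (C/2 - 2)" using assms by simp
      from mult_right_mono[OF this, of "x\<^sup>2"] show ?thesis by (simp add: mult.assoc)
    qed
    moreover have "(2 + C/2) * (2*b\<^sup>2) \<le> 5 * C * b\<^sup>2" using mult_right_mono[of "(2 + C/2) * 2" "5 * C" "b\<^sup>2"] assms by (simp add: algebra_simps)
    moreover have "(2 + C/2) * (2*a\<^sup>2*x\<^sup>2 + 2*b\<^sup>2) = (2 + C/2) * (2*a\<^sup>2*x\<^sup>2) + (2 + C/2) * (2*b\<^sup>2)"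
      by (simp add: algebra_simps)
    moreover have "C/2 * (x\<^sup>2 - E\<^sup>2) + 5 * C * b\<^sup>2 - (2*x\<^sup>2 + 2*E\<^sup>2) = (C/2 - 2) * x\<^sup>2 + 5 * C * b\<^sup>2 - (2 + C/2) * E\<^sup>2"
      by (simp add: algebra_simps)
    ultimately show ?thesis by linarith
  qed
  have "\<eta> * N\<^sup>2 \<le> \<eta> * (2*x\<^sup>2 + 2*E\<^sup>2)" using N2 assms by (intro mult_left_mono) auto
  also have "\<dots> \<le> \<eta> * (C/2 * (x\<^sup>2 - E\<^sup>2) + 5 * C * b\<^sup>2)" using key assms by (intro mult_left_mono) auto
  also have "\<dots> = C * (\<eta>/2 * (x\<^sup>2 - E\<^sup>2)) + \<eta> * (5 * C * b\<^sup>2)" by (simp add: algebra_simps)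
  also have "\<dots> \<le> C * D + C * (5 + \<eta>) * b\<^sup>2" using CD b5 by linarith
  finally show ?thesis .
qed


theorem mainTheorem3:
  fixes g :: "'a::euclidean_space \<Rightarrow> real"
    and grad_g G :: "'a \<Rightarrow> 'a"
    and y :: "nat \<Rightarrow> 'a"
    and L1 a b \<eta> :: real
  assumes grad: "\<And>x. (g has_derivative (\<lambda>h. grad_g x \<bullet> h)) (at x)"
    and lip: "L1-lipschitz_on UNIV grad_g"
    and inexact: "inexact_gradient_oracle a b grad_g G"
    and a_nonneg: "0 \<le> a" and a_le: "a \<le> 1/20"
    and b_nonneg: "0 \<le> b"
    and eta_pos: "0 < \<eta>" and eta_le1: "\<eta> \<le> 1" and eta_L1: "\<eta> * L1 \<le> 1"
    and rec: "\<And>t. y (Suc t) = y t - \<eta> *\<^sub>R G (y t)"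
    and tau_le: "\<tau> \<le> t"
  shows "(norm (y \<tau> - y 0))\<^sup>2
         \<le> 16 * \<eta> * real t * ((1 + a)\<^sup>2 / (1 - a))
             * (g (y 0) - g (y t) + (5 + \<eta>) * real t * b\<^sup>2)"
proof -
  define C where "C = 16 * ((1 + a)\<^sup>2 / (1 - a))"
  define N where "N k = norm (G (y k))" for k
  have C16: "16 \<le> C"
  proof -
    have "1 \<le> (1 + a)\<^sup>2" using a_nonneg by (simp add: one_le_power)
    moreover have "0 < 1 - a" "1 - a \<le> 1" using a_le a_nonneg by auto
    moreover have "1 - a \<le> (1 + a)\<^sup>2"
      using a_nonneg zero_le_square[of a] unfolding power2_eq_square by (simp add: algebra_simps)
    ultimately have "1 \<le> (1 + a)\<^sup>2 / (1 - a)" by (simp add: le_divide_eq)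
    thus ?thesis unfolding C_def by simp
  qed
  have step: "\<eta> * (N k)\<^sup>2 \<le> C * (g (y k) - g (y (Suc k))) + C * (5 + \<eta>) * b\<^sup>2" for k
  proof -
    define v where "v = grad_g (y k)"
    define w where "w = G (y k)"
    have desc: "g (y (Suc k)) \<le> g (y k) + v \<bullet> (- \<eta> *\<^sub>R w) + L1 / 2 * (norm (- \<eta> *\<^sub>R w))\<^sup>2"
      using descent[OF grad lip, of "y k" "- \<eta> *\<^sub>R w"] rec[of k] unfolding v_def w_def by simp
    have L0: "0 \<le> L1" using lip by (simp add: lipschitz_on_def)
    have "L1 / 2 * (norm (- \<eta> *\<^sub>R w))\<^sup>2 = (\<eta> * L1) * \<eta> / 2 * (norm w)\<^sup>2"
      using eta_pos by (simp add: power2_eq_square)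
    also have "\<dots> \<le> 1 * \<eta> / 2 * (norm w)\<^sup>2"
      using eta_L1 eta_pos by (intro mult_right_mono divide_right_mono) auto
    finally have desc2: "g (y (Suc k)) \<le> g (y k) - \<eta> * (v \<bullet> w) + \<eta> / 2 * (norm w)\<^sup>2"
      using desc by simp
    have id: "(norm (v - w))\<^sup>2 = (norm v)\<^sup>2 - 2 * (v \<bullet> w) + (norm w)\<^sup>2"
      by (simp add: power2_norm_eq_inner inner_diff_left inner_diff_right inner_commute)
    have D: "g (y k) - g (y (Suc k)) \<ge> \<eta>/2 * ((norm v)\<^sup>2 - (norm (v - w))\<^sup>2)"
    proof -
      have "\<eta>/2 * ((norm v)\<^sup>2 - (norm (v - w))\<^sup>2) = \<eta> * (v \<bullet> w) - \<eta> / 2 * (norm w)\<^sup>2"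
        unfolding id by (simp add: algebra_simps)
      thus ?thesis using desc2 by linarith
    qed
    have E: "norm (v - w) \<le> a * norm v + b"
      using inexact unfolding inexact_gradient_oracle_def v_def w_def by blast
    have Nw: "norm w \<le> norm v + norm (v - w)"
      using norm_triangle_ineq4[of v "v - w"] by simp
    show ?thesis
      using step_real[OF norm_ge_zero norm_ge_zero E Nw[folded N_def[of k] w_def] norm_ge_zero D a_nonneg a_le b_nonneg eta_pos eta_le1 C16]
      unfolding N_def w_def by simp
  qed
  have sumstep: "\<eta> * (\<Sum>k<t. (N k)\<^sup>2) \<le> C * (g (y 0) - g (y t)) + C * (5 + \<eta>) * real t * b\<^sup>2"
  proof -
    have "\<eta> * (\<Sum>k<t. (N k)\<^sup>2) = (\<Sum>k<t. \<eta> * (N k)\<^sup>2)" by (simp add: sum_distrib_left)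
    also have "\<dots> \<le> (\<Sum>k<t. C * (g (y k) - g (y (Suc k))) + C * (5 + \<eta>) * b\<^sup>2)"
      by (rule sum_mono) (rule step)
    also have "\<dots> = C * (\<Sum>k<t. g (y k) - g (y (Suc k))) + C * (5 + \<eta>) * real t * b\<^sup>2"
      by (simp add: sum.distrib sum_distrib_left)
    also have "(\<Sum>k<t. g (y k) - g (y (Suc k))) = g (y 0) - g (y t)"
      using sum_lessThan_telescope'[of "\<lambda>k. g (y k)" t] by simp
    finally show ?thesis .
  qed
  have ydiff: "y n - y 0 = - \<eta> *\<^sub>R (\<Sum>k<n. G (y k))" for n
    by (induction n) (simp_all add: rec scaleR_add_right)
  have "norm (y \<tau> - y 0) = \<eta> * norm (\<Sum>k<\<tau>. G (y k))"
    using eta_pos by (simp add: ydiff)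
  also have "\<dots> \<le> \<eta> * (\<Sum>k<\<tau>. N k)"
    unfolding N_def using eta_pos by (intro mult_left_mono norm_sum) auto
  finally have n1: "norm (y \<tau> - y 0) \<le> \<eta> * (\<Sum>k<\<tau>. N k)" .
  have "(norm (y \<tau> - y 0))\<^sup>2 \<le> (\<eta> * (\<Sum>k<\<tau>. N k))\<^sup>2"
    using n1 by (intro power_mono) auto
  also have "\<dots> = \<eta>\<^sup>2 * (\<Sum>k<\<tau>. N k)\<^sup>2" by (simp add: power_mult_distrib)
  also have "\<dots> \<le> \<eta>\<^sup>2 * ((\<Sum>k<\<tau>. (N k)\<^sup>2) * real \<tau>)"
    using sum_squared_le_sum_of_squares[of N "{..<\<tau>}"] by (intro mult_left_mono) auto
  also have "\<dots> \<le> \<eta>\<^sup>2 * ((\<Sum>k<t. (N k)\<^sup>2) * real t)"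
  proof -
    have "(\<Sum>k<\<tau>. (N k)\<^sup>2) \<le> (\<Sum>k<t. (N k)\<^sup>2)"
      using tau_le by (intro sum_mono2) auto
    moreover have "0 \<le> (\<Sum>k<\<tau>. (N k)\<^sup>2)" by (intro sum_nonneg) auto
    ultimately show ?thesis using tau_le by (intro mult_left_mono mult_mono) auto
  qed
  also have "\<dots> = (\<eta> * real t) * (\<eta> * (\<Sum>k<t. (N k)\<^sup>2))" by (simp add: power2_eq_square)
  also have "\<dots> \<le> (\<eta> * real t) * (C * (g (y 0) - g (y t)) + C * (5 + \<eta>) * real t * b\<^sup>2)"
    using sumstep eta_pos by (intro mult_left_mono) auto
  also have "\<dots> = 16 * \<eta> * real t * ((1 + a)\<^sup>2 / (1 - a))
             * (g (y 0) - g (y t) + (5 + \<eta>) * real t * b\<^sup>2)"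
    unfolding C_def by (simp add: divide_inverse algebra_simps)
  finally show ?thesis .
qed

end
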